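(* Let $\mathcal{P}$ be a primitive collection of $\Sigma$, with $\sigma$, $c_{i,j}$ ($(i,j)\in\sigma(1)$) and $c_{i,0}$ as in the context, and define $d\in\mathbb{Z}^J$ by $$0=\sum_{(i,j)\in\mathcal{P}}\nu_{i,j}-\sum_{(i,j)\in\sigma(1)}c_{i,j}\nu_{i,j}-\sum_{i=1}^r c_{i,0}\nu_{i,0}=\sum_{(i,j)\in J}d_{i,j}\nu_{i,j}.$$ Then $d=\ell_{\mathrm{ext}}(\mathcal{P})$, the image of the primitive relation $\ell(\mathcal{P})$ under the isomorphism $L\cong L_{\mathrm{ext}}$. Moreover $\ell_{\mathrm{ext}}^+(\mathcal{P})$ is the indicator vector of $\mathcal{P}$ (entry $1$ at $(i,j)\in\mathcal{P}$, $0$ elsewhere, in particular $0$ at all $(i,0)$), and $\ell_{\mathrm{ext}}^-(\mathcal{P})$ has entries $c_{i,j}$ at $(i,j)\in\sigma(1)$, $c_{i,0}$ at $(i,0)$, and $0$ elsewhere.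
   Context: Let $N\cong\mathbb{Z}^n$, $M$ its dual. $X$ is a smooth projective toric variety with fan $\Sigma$ in $N_\mathbb{R}$ and nef-partition $\Sigma(1)=I_1\sqcup\cdots\sqcup I_r$ (each $E_i=\sum_{\rho\in I_i}D_\rho$ nef), $I_i=\{\rho_{i,1},\dots,\rho_{i,n_i}\}$, $p=\sum n_i$, $J=\{(i,j):1\le i\le r,0\le j\le n_i\}$, $I=\{(i,j):j\ge1\}$. $\nu_{i,j}=(\rho_{i,j},e_i)$ for $j\ge1$, $\nu_{i,0}=(0,e_i)$ in $N\times\mathbb{Z}^r$. $A_{\mathrm{ext}}:\mathbb{Z}^J\to N\times\mathbb{Z}^r$, $e_{i,j}\mapsto\nu_{i,j}$, $A:\mathbb{Z}^I\to N$, $e_{i,j}\mapsto\rho_{i,j}$; $L_{\mathrm{ext}}=\ker A_{\mathrm{ext}}$, $L=\ker A$, and forgetting the $(i,0)$-coordinates is an isomorphism $L_{\mathrm{ext}}\cong L$. For $\ell\in\mathbb{Z}^J$, $\ell=\ell^+-\ell^-$ with $\ell^\pm\ge0$ of disjoint supports. A primitive collection $\mathcal{P}\subset\Sigma(1)$ is a set not spanning a cone of $\Sigma$ all of whose proper subsets do; $\sigma$ is the unique cone of $\Sigma$ containing $\sum_{\mathcal{P}}\rho_{i,j}$ in its relative interior, $\sum_{\mathcal{P}}\rho_{i,j}=\sum_{\sigma(1)}c_{i,j}\rho_{i,j}$ with $c_{i,j}\in\mathbb{Z}_{>0}$, and the primitive relation $\ell(\mathcal{P})\in L$ is the coefficient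 vector of $\sum_{\mathcal{P}}\rho_{i,j}-\sum_{\sigma(1)}c_{i,j}\rho_{i,j}=0$. The integers $c_{i,0}$ are the unique integers with $\sum_{\mathcal{P}}\nu_{i,j}=\sum_{\sigma(1)}c_{i,j}\nu_{i,j}+\sum_i c_{i,0}\nu_{i,0}$. (It is known that $\mathcal{P}\cap\sigma(1)=\emptyset$ for smooth $X$.) *)

theory Defs
  imports "HOL-Analysis.Analysis"
begin

text \<open>The lattice N is int^'n. Rays are indexed by pairs (i,j), 1 <= i <= r,
  1 <= j <= n i, with primitive ray vector rho (i,j). A cone of the (simplicial) fan is
  recorded by the set of indices of its rays. Vectors in Z^J, Z^I are functions
  nat \<times> nat \<Rightarrow> int vanishing outside J (resp. I).\<close>

definition rv :: "int^'n \<Rightarrow> real^'n" where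
  "rv v = (\<chi> k. real_of_int (v $ k))"

definition Iset :: "nat \<Rightarrow> (nat \<Rightarrow> nat) \<Rightarrow> (nat \<times> nat) set" where
  "Iset r n = {(i,j). 1 \<le> i \<and> i \<le> r \<and> 1 \<le> j \<and> j \<le> n i}"

definition Jset :: "nat \<Rightarrow> (nat \<Rightarrow> nat) \<Rightarrow> (nat \<times> nat) set" where
  "Jset r n = {(i,j). 1 \<le> i \<and> i \<le> r \<and> j \<le> n i}"

definition Ipart :: "(nat \<Rightarrow> nat) \<Rightarrow> nat \<Rightarrow> (nat \<times> nat) set" where
  "Ipart n i = {(i,j) | j. 1 \<le> j \<and> j \<le> n i}"

definition cone_of :: "(nat \<times> nat \<Rightarrow> int^'n) \<Rightarrow> (nat \<times> nat) set \<Rightarrow> (real^'n) set" where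
  "cone_of \<rho> C = {(\<Sum>k\<in>C. a k *\<^sub>R rv (\<rho> k)) | a. \<forall>k\<in>C. 0 \<le> a k}"

text \<open>Smooth cone: its ray generators form part of a Z-basis of N
  (linearly independent and generating the saturated sublattice).\<close>
definition smooth_cone :: "(nat \<times> nat \<Rightarrow> int^'n) \<Rightarrow> (nat \<times> nat) set \<Rightarrow> bool" where
  "smooth_cone \<rho> C \<longleftrightarrow> finite C \<and> inj_on (\<lambda>k. rv (\<rho> k)) C
     \<and> independent ((\<lambda>k. rv (\<rho> k)) ` C)
     \<and> (\<forall>v::int^'n. rv v \<in> span ((\<lambda>k. rv (\<rho> k)) ` C) \<longrightarrow>
            (\<exists>a. v = (\<Sum>k\<in>C. a k *s \<rho> k)))"

definition smooth_complete_fan ::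
  "(nat \<times> nat \<Rightarrow> int^'n) \<Rightarrow> (nat \<times> nat) set set \<Rightarrow> (nat \<times> nat) set \<Rightarrow> bool" where
  "smooth_complete_fan \<rho> \<Sigma> R \<longleftrightarrow> finite \<Sigma>
     \<and> (\<forall>C\<in>\<Sigma>. C \<subseteq> R \<and> smooth_cone \<rho> C)
     \<and> (\<forall>C\<in>\<Sigma>. \<forall>D. D \<subseteq> C \<longrightarrow> D \<in> \<Sigma>)
     \<and> (\<forall>k\<in>R. {k} \<in> \<Sigma>)
     \<and> (\<forall>C\<in>\<Sigma>. \<forall>D\<in>\<Sigma>. cone_of \<rho> C \<inter> cone_of \<rho> D = cone_of \<rho> (C \<inter> D))
     \<and> (\<Union>C\<in>\<Sigma>. cone_of \<rho> C) = UNIV"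

definition maximal_cone :: "(nat \<times> nat) set set \<Rightarrow> (nat \<times> nat) set \<Rightarrow> bool" where
  "maximal_cone \<Sigma> C \<longleftrightarrow> C \<in> \<Sigma> \<and> (\<forall>D\<in>\<Sigma>. C \<subseteq> D \<longrightarrow> D = C)"

text \<open>Projectivity: existence of an ample torus-invariant divisor sum a_k D_k, i.e. a
  strictly convex support function.\<close>
definition projective_fan ::
  "(nat \<times> nat \<Rightarrow> int^'n) \<Rightarrow> (nat \<times> nat) set set \<Rightarrow> (nat \<times> nat) set \<Rightarrow> bool" where
  "projective_fan \<rho> \<Sigma> R \<longleftrightarrow> (\<exists>a :: nat \<times> nat \<Rightarrow> int. \<forall>C. maximal_cone \<Sigma> C \<longrightarrow>
      (\<exists>m :: real^'n. (\<forall>k\<in>C. m \<bullet> rv (\<rho> k) = - of_int (a k))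
                    \<and> (\<forall>k\<in>R - C. m \<bullet> rv (\<rho> k) > - of_int (a k))))"

text \<open>The divisor sum a_k D_k is nef (convex support function), CLS convention.\<close>
definition nef_divisor ::
  "(nat \<times> nat \<Rightarrow> int^'n) \<Rightarrow> (nat \<times> nat) set set \<Rightarrow> (nat \<times> nat) set \<Rightarrow> (nat \<times> nat \<Rightarrow> int) \<Rightarrow> bool" where
  "nef_divisor \<rho> \<Sigma> R a \<longleftrightarrow> (\<forall>C\<in>\<Sigma>.
      \<exists>m :: real^'n. (\<forall>k\<in>C. m \<bullet> rv (\<rho> k) = - of_int (a k))
                   \<and> (\<forall>k\<in>R. m \<bullet> rv (\<rho> k) \<ge> - of_int (a k)))"

definition nef_partition ::
  "(nat \<times> nat \<Rightarrow> int^'n) \<Rightarrow> (nat \<times> nat) set set \<Rightarrow> nat \<Rightarrow> (nat \<Rightarrow> nat) \<Rightarrow> bool" where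
  "nef_partition \<rho> \<Sigma> r n \<longleftrightarrow> (\<forall>i\<in>{1..r}.
      nef_divisor \<rho> \<Sigma> (Iset r n) (\<lambda>k. if k \<in> Ipart n i then 1 else 0))"

definition primitive_collection ::
  "(nat \<times> nat) set set \<Rightarrow> (nat \<times> nat) set \<Rightarrow> (nat \<times> nat) set \<Rightarrow> bool" where
  "primitive_collection \<Sigma> R P \<longleftrightarrow> P \<subseteq> R \<and> P \<notin> \<Sigma> \<and> (\<forall>Q. Q \<subset> P \<longrightarrow> Q \<in> \<Sigma>)"

text \<open>nu_{i,j} in N \<times> Z^r (Z^r as functions nat \<Rightarrow> int, e_i = indicator of i).\<close>
definition nuN :: "(nat \<times> nat \<Rightarrow> int^'n) \<Rightarrow> nat \<times> nat \<Rightarrow> int^'n" where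
  "nuN \<rho> k = (if snd k = 0 then 0 else \<rho> k)"

definition nuZ :: "nat \<times> nat \<Rightarrow> nat \<Rightarrow> int" where
  "nuZ k = (\<lambda>i. if i = fst k then 1 else 0)"

definition A_ext :: "(nat \<times> nat \<Rightarrow> int^'n) \<Rightarrow> nat \<Rightarrow> (nat \<Rightarrow> nat) \<Rightarrow> (nat \<times> nat \<Rightarrow> int)
      \<Rightarrow> (int^'n) \<times> (nat \<Rightarrow> int)" where
  "A_ext \<rho> r n x = ((\<Sum>k\<in>Jset r n. x k *s nuN \<rho> k), (\<lambda>i. \<Sum>k\<in>Jset r n. x k * nuZ k i))"

definition L_ext :: "(nat \<times> nat \<Rightarrow> int^'n) \<Rightarrow> nat \<Rightarrow> (nat \<Rightarrow> nat) \<Rightarrow> (nat \<times> nat \<Rightarrow> int) set" where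
  "L_ext \<rho> r n = {x. (\<forall>k. k \<notin> Jset r n \<longrightarrow> x k = 0) \<and> A_ext \<rho> r n x = (0, (\<lambda>_. 0))}"

definition A_map :: "(nat \<times> nat \<Rightarrow> int^'n) \<Rightarrow> nat \<Rightarrow> (nat \<Rightarrow> nat) \<Rightarrow> (nat \<times> nat \<Rightarrow> int) \<Rightarrow> int^'n" where
  "A_map \<rho> r n x = (\<Sum>k\<in>Iset r n. x k *s \<rho> k)"

definition L_lat :: "(nat \<times> nat \<Rightarrow> int^'n) \<Rightarrow> nat \<Rightarrow> (nat \<Rightarrow> nat) \<Rightarrow> (nat \<times> nat \<Rightarrow> int) set" where
  "L_lat \<rho> r n = {x. (\<forall>k. k \<notin> Iset r n \<longrightarrow> x k = 0) \<and> A_map \<rho> r n x = 0}"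

text \<open>Primitive relation: coefficient vector of sum_P rho - sum_sigma c rho = 0.\<close>
definition primitive_relation ::
  "(nat \<times> nat) set \<Rightarrow> (nat \<times> nat) set \<Rightarrow> (nat \<times> nat \<Rightarrow> int) \<Rightarrow> nat \<times> nat \<Rightarrow> int" where
  "primitive_relation P \<sigma> c = (\<lambda>k. (if k \<in> P then 1 else 0) - (if k \<in> \<sigma> then c k else 0))"

text \<open>Inverse of the isomorphism L_ext \<rightarrow> L forgetting the (i,0)-coordinates.\<close>
definition ext_of :: "(nat \<times> nat \<Rightarrow> int^'n) \<Rightarrow> nat \<Rightarrow> (nat \<Rightarrow> nat) \<Rightarrow> (nat \<times> nat \<Rightarrow> int)
      \<Rightarrow> nat \<times> nat \<Rightarrow> int" where
  "ext_of \<rho> r n l = (THE x. x \<in> L_ext \<rho> r n \<and> (\<forall>k\<in>Iset r n. x k = l k))"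

definition pos_part :: "('a \<Rightarrow> int) \<Rightarrow> 'a \<Rightarrow> int" where
  "pos_part l = (\<lambda>k. max (l k) 0)"

definition neg_part :: "('a \<Rightarrow> int) \<Rightarrow> 'a \<Rightarrow> int" where
  "neg_part l = (\<lambda>k. max (- l k) 0)"

end

theory Submission
  imports Defs
begin

lemma rv_sum: "rv (sum f A) = (\<Sum>x\<in>A. rv (f x))"
  by (simp add: rv_def vec_eq_iff)
lemma rv_smult: "rv (a *s v) = of_int a *\<^sub>R rv v"
  by (simp add: rv_def vec_eq_iff)

lemma indep_coeffs:
  fixes f :: "'a \<Rightarrow> real^'n"
  assumes "finite C" "inj_on f C" "independent (f ` C)"
    "(\<Sum>k\<in>C. u k *\<^sub>R f k) = 0" "k \<in> C"
  shows "u k = 0"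
proof -
  have "(\<Sum>v\<in>f ` C. u (inv_into C f v) *\<^sub>R v) = (\<Sum>k\<in>C. u k *\<^sub>R f k)"
    using assms(2) by (simp add: sum.reindex)
  moreover have "finite (f ` C) \<and> (\<forall>c. (\<Sum>v\<in>f ` C. c v *\<^sub>R v) = 0 \<longrightarrow> (\<forall>v\<in>f ` C. c v = 0))"
    using assms(3) unfolding independent_explicit by blast
  ultimately have "\<forall>v\<in>f ` C. u (inv_into C f v) = 0"
    using assms(4) by metis
  then show ?thesis using assms(2,5) by force
qed

lemma finite_Jset: "finite (Jset r n)"
proof -
  have "Jset r n = (SIGMA i:{1..r}. {0..n i})" by (auto simp: Jset_def)
  then show ?thesis by simp
qed
lemma Iset_sub: "Iset r n \<subseteq> Jset r n" by (auto simp: Iset_def Jset_def)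

lemma disjoint_P_sigma:
  assumes fan: "smooth_complete_fan \<rho> \<Sigma> (Iset r n)"
    and prim: "primitive_collection \<Sigma> (Iset r n) P"
    and sigma: "\<sigma> \<in> \<Sigma>"
    and cpos: "\<forall>k\<in>\<sigma>. c k > 0"
    and crel: "(\<Sum>k\<in>P. \<rho> k) = (\<Sum>k\<in>\<sigma>. c k *s \<rho> k)"
  shows "P \<inter> \<sigma> = {}"
proof (rule ccontr)
  assume "P \<inter> \<sigma> \<noteq> {}"
  then obtain k0 where k0: "k0 \<in> P" "k0 \<in> \<sigma>" by blast
  define \<tau> where "\<tau> = P - {k0}"
  have PI: "P \<subseteq> Iset r n" using prim by (simp add: primitive_collection_def)
  have finP: "finite P" using PI Iset_sub finite_Jset finite_subset by metis
  have \<tau>S: "\<tau> \<in> \<Sigma>" using prim k0 unfolding primitive_collection_def \<tau>_def by blast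
  have PnS: "P \<notin> \<Sigma>" using prim by (simp add: primitive_collection_def)
  have sc\<tau>: "smooth_cone \<rho> \<tau>" using fan \<tau>S by (simp add: smooth_complete_fan_def)
  have sc\<sigma>: "smooth_cone \<rho> \<sigma>" using fan sigma by (simp add: smooth_complete_fan_def)
  have fin\<sigma>: "finite \<sigma>" using sc\<sigma> by (simp add: smooth_cone_def)
  have fin\<tau>: "finite \<tau>" using sc\<tau> by (simp add: smooth_cone_def)
  have inter: "cone_of \<rho> \<tau> \<inter> cone_of \<rho> \<sigma> = cone_of \<rho> (\<tau> \<inter> \<sigma>)"
    using fan \<tau>S sigma by (simp add: smooth_complete_fan_def)
  define v where "v = (\<Sum>k\<in>\<tau>. rv (\<rho> k))"
  have v1: "v \<in> cone_of \<rho> \<tau>"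
    unfolding cone_of_def v_def by (rule CollectI, rule exI[of _ "\<lambda>_. 1"]) simp
  have "rv (\<Sum>k\<in>P. \<rho> k) = rv (\<rho> k0) + v"
    unfolding rv_sum v_def \<tau>_def using finP k0 by (simp add: sum.remove)
  moreover have "rv (\<Sum>k\<in>\<sigma>. c k *s \<rho> k) = (\<Sum>k\<in>\<sigma>. of_int (c k) *\<^sub>R rv (\<rho> k))"
    by (simp add: rv_sum rv_smult)
  ultimately have "v = (\<Sum>k\<in>\<sigma>. of_int (c k) *\<^sub>R rv (\<rho> k)) - rv (\<rho> k0)"
    using crel by (metis add_diff_cancel_left')
  also have "\<dots> = (\<Sum>k\<in>\<sigma>. of_int (c k) *\<^sub>R rv (\<rho> k)) - (\<Sum>k\<in>\<sigma>. (if k = k0 then 1 else 0) *\<^sub>R rv (\<rho> k))"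
    using k0 fin\<sigma> by (simp add: if_distrib[of "\<lambda>x. x *\<^sub>R _"] sum.delta' cong: if_cong)
  also have "\<dots> = (\<Sum>k\<in>\<sigma>. (of_int (c k) - (if k = k0 then 1 else 0)) *\<^sub>R rv (\<rho> k))"
    by (simp add: sum_subtractf scaleR_left_diff_distrib)
  finally have veq: "v = (\<Sum>k\<in>\<sigma>. (of_int (c k) - (if k = k0 then 1 else 0)) *\<^sub>R rv (\<rho> k))" .
  have nn: "\<forall>k\<in>\<sigma>. 0 \<le> (of_int (c k) - (if k = k0 then 1 else 0) :: real)"
    using cpos by force
  have v2: "v \<in> cone_of \<rho> \<sigma>"
    unfolding cone_of_def veq
    apply (rule CollectI, rule exI[of _ "\<lambda>k. of_int (c k) - (if k = k0 then 1 else 0)"])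
    using nn by simp
  from v1 v2 inter have "v \<in> cone_of \<rho> (\<tau> \<inter> \<sigma>)" by blast
  then obtain b where b: "v = (\<Sum>k\<in>\<tau> \<inter> \<sigma>. b k *\<^sub>R rv (\<rho> k))"
    unfolding cone_of_def by blast
  have "(\<Sum>k\<in>\<tau>. (1 - (if k \<in> \<sigma> then b k else 0)) *\<^sub>R rv (\<rho> k))
        = v - (\<Sum>k\<in>\<tau>. (if k \<in> \<sigma> then b k *\<^sub>R rv (\<rho> k) else 0))"
    unfolding v_def by (simp add: scaleR_left_diff_distrib sum_subtractf if_distrib[of "\<lambda>x. x *\<^sub>R _"] cong: if_cong)
  also have "\<dots> = 0" using b fin\<tau> by (simp add: sum.inter_restrict)
  finally have z: "(\<Sum>k\<in>\<tau>. (1 - (if k \<in> \<sigma> then b k else 0)) *\<^sub>R rv (\<rho> k)) = 0" .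
  have "\<tau> \<subseteq> \<sigma>"
  proof
    fix k assume k: "k \<in> \<tau>"
    show "k \<in> \<sigma>"
    proof (rule ccontr)
      assume "k \<notin> \<sigma>"
      have "(1 - (if k \<in> \<sigma> then b k else 0)) = (0::real)"
        using indep_coeffs[OF fin\<tau> _ _ z k] sc\<tau> unfolding smooth_cone_def by blast
      with \<open>k \<notin> \<sigma>\<close> show False by simp
    qed
  qed
  then have "P \<subseteq> \<sigma>" using k0 unfolding \<tau>_def by blast
  then have "P \<in> \<Sigma>" using fan sigma unfolding smooth_complete_fan_def by blast
  with PnS show False by blast
qed

lemma nuZ_Iset: "k \<in> Iset r n \<Longrightarrow> nuZ k i = (if k \<in> Ipart n i then 1 else 0)"
  by (cases k) (auto simp: nuZ_def Iset_def Ipart_def)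

lemma c0_nonneg:
  fixes \<rho> :: "nat \<times> nat \<Rightarrow> int^'n"
  assumes fan: "smooth_complete_fan \<rho> \<Sigma> (Iset r n)"
    and nef: "nef_partition \<rho> \<Sigma> r n"
    and prim: "primitive_collection \<Sigma> (Iset r n) P"
    and sigma: "\<sigma> \<in> \<Sigma>"
    and crel: "(\<Sum>k\<in>P. \<rho> k) = (\<Sum>k\<in>\<sigma>. c k *s \<rho> k)"
    and c0rel: "A_ext \<rho> r n (\<lambda>k. if k \<in> P then 1 else 0)
              = A_ext \<rho> r n (\<lambda>k. (if k \<in> \<sigma> then c k else 0)
                     + (if snd k = 0 \<and> fst k \<in> {1..r} then c0 (fst k) else 0))"
    and i: "i \<in> {1..r}"
  shows "c0 i \<ge> 0"
proof -
  define a where "a = (\<lambda>k. if k \<in> Ipart n i then 1 else 0 :: int)"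
  have PI: "P \<subseteq> Iset r n" using prim by (simp add: primitive_collection_def)
  have \<sigma>I: "\<sigma> \<subseteq> Iset r n" using fan sigma by (simp add: smooth_complete_fan_def)
  have finJ: "finite (Jset r n)" by (rule finite_Jset)
  have finP: "finite P" using PI Iset_sub finite_Jset finite_subset by metis
  have fin\<sigma>: "finite \<sigma>" using \<sigma>I Iset_sub finite_Jset finite_subset by metis
  have PJ: "P \<subseteq> Jset r n" and \<sigma>J: "\<sigma> \<subseteq> Jset r n" using PI \<sigma>I Iset_sub by blast+
  obtain m :: "real^'n" where m1: "\<forall>k\<in>\<sigma>. m \<bullet> rv (\<rho> k) = - of_int (a k)"
    and m2: "\<forall>k\<in>Iset r n. m \<bullet> rv (\<rho> k) \<ge> - of_int (a k)"
    using nef i sigma unfolding nef_partition_def nef_divisor_def a_def by blast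
  have "m \<bullet> rv (\<Sum>k\<in>P. \<rho> k) = (\<Sum>k\<in>P. m \<bullet> rv (\<rho> k))"
    by (simp add: rv_sum inner_sum_right)
  also have "\<dots> \<ge> (\<Sum>k\<in>P. - of_int (a k))"
    using m2 PI by (intro sum_mono) blast
  finally have ge: "m \<bullet> rv (\<Sum>k\<in>P. \<rho> k) \<ge> - of_int (\<Sum>k\<in>P. a k)"
    by (simp add: sum_negf)
  have "m \<bullet> rv (\<Sum>k\<in>\<sigma>. c k *s \<rho> k) = (\<Sum>k\<in>\<sigma>. of_int (c k) * (m \<bullet> rv (\<rho> k)))"
    by (simp add: rv_sum rv_smult inner_sum_right)
  also have "\<dots> = (\<Sum>k\<in>\<sigma>. - of_int (c k * a k))"
    using m1 by (intro sum.cong) auto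
  finally have eq: "m \<bullet> rv (\<Sum>k\<in>\<sigma>. c k *s \<rho> k) = - of_int (\<Sum>k\<in>\<sigma>. c k * a k)"
    by (simp add: sum_negf)
  from ge eq crel have "real_of_int (\<Sum>k\<in>\<sigma>. c k * a k) \<le> real_of_int (\<Sum>k\<in>P. a k)" by simp
  then have ineq: "(\<Sum>k\<in>\<sigma>. c k * a k) \<le> (\<Sum>k\<in>P. a k)" by (simp only: of_int_le_iff)
  have "snd (A_ext \<rho> r n (\<lambda>k. if k \<in> P then 1 else 0)) i
      = snd (A_ext \<rho> r n (\<lambda>k. (if k \<in> \<sigma> then c k else 0)
                     + (if snd k = 0 \<and> fst k \<in> {1..r} then c0 (fst k) else 0))) i"
    using c0rel by simp
  then have e: "(\<Sum>k\<in>Jset r n. (if k \<in> P then 1 else 0) * nuZ k i)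
     = (\<Sum>k\<in>Jset r n. (if k \<in> \<sigma> then c k * nuZ k i else 0))
       + (\<Sum>k\<in>Jset r n. (if snd k = 0 \<and> fst k \<in> {1..r} then c0 (fst k) else 0) * nuZ k i)"
    unfolding A_ext_def by (simp add: distrib_right sum.distrib if_distrib[of "\<lambda>x. x * _"] cong: if_cong)
  have e1: "(\<Sum>k\<in>Jset r n. (if k \<in> P then 1 else 0) * nuZ k i) = (\<Sum>k\<in>P. a k)"
  proof -
    have "(\<Sum>k\<in>Jset r n. (if k \<in> P then 1 else 0) * nuZ k i) = (\<Sum>k\<in>Jset r n. if k \<in> P then nuZ k i else 0)"
      by (intro sum.cong) auto
    also have "\<dots> = (\<Sum>k\<in>Jset r n \<inter> P. nuZ k i)" using finJ by (simp add: sum.inter_restrict)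
    also have "Jset r n \<inter> P = P" using PJ by blast
    also have "(\<Sum>k\<in>P. nuZ k i) = (\<Sum>k\<in>P. a k)"
      using PI by (intro sum.cong) (auto simp: nuZ_Iset a_def)
    finally show ?thesis .
  qed
  have e2: "(\<Sum>k\<in>Jset r n. (if k \<in> \<sigma> then c k * nuZ k i else 0)) = (\<Sum>k\<in>\<sigma>. c k * a k)"
  proof -
    have "(\<Sum>k\<in>Jset r n. (if k \<in> \<sigma> then c k * nuZ k i else 0)) = (\<Sum>k\<in>Jset r n \<inter> \<sigma>. c k * nuZ k i)"
      using finJ by (simp add: sum.inter_restrict)
    also have "Jset r n \<inter> \<sigma> = \<sigma>" using \<sigma>J by blast
    also have "(\<Sum>k\<in>\<sigma>. c k * nuZ k i) = (\<Sum>k\<in>\<sigma>. c k * a k)"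
      using \<sigma>I by (intro sum.cong) (auto simp: nuZ_Iset a_def)
    finally show ?thesis .
  qed
  have e3: "(\<Sum>k\<in>Jset r n. (if snd k = 0 \<and> fst k \<in> {1..r} then c0 (fst k) else 0) * nuZ k i) = c0 i"
  proof -
    have "(\<Sum>k\<in>Jset r n. (if snd k = 0 \<and> fst k \<in> {1..r} then c0 (fst k) else 0) * nuZ k i)
        = (\<Sum>k\<in>Jset r n. if k = (i,0) then c0 i else 0)"
      using i by (intro sum.cong) (auto simp: nuZ_def)
    also have "\<dots> = c0 i" using i finJ by (simp add: sum.delta' Jset_def)
    finally show ?thesis .
  qed
  from e e1 e2 e3 ineq show ?thesis by simp
qed

lemma A_ext_diff:
  "A_ext \<rho> r n (\<lambda>k. x k - y k) =
     (fst (A_ext \<rho> r n x) - fst (A_ext \<rho> r n y), \<lambda>i. snd (A_ext \<rho> r n x) i - snd (A_ext \<rho> r n y) i)"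
  unfolding A_ext_def by (simp add: sum_subtractf left_diff_distrib vec_eq_iff)

lemma L_ext_unique:
  assumes x: "x \<in> L_ext \<rho> r n" and y: "y \<in> L_ext \<rho> r n"
    and agree: "\<forall>k\<in>Iset r n. x k = y k"
  shows "x = y"
proof
  fix k
  show "x k = y k"
  proof (cases "k \<in> Jset r n")
    case False
    have "x k = 0" "y k = 0" using False x y unfolding L_ext_def by blast+
    then show ?thesis by simp
  next
    case True
    show ?thesis
    proof (cases "k \<in> Iset r n")
      case True then show ?thesis using agree by blast
    next
      case False
      obtain i j where k: "k = (i,j)" by (cases k)
      have j: "j = 0" and i: "1 \<le> i" "i \<le> r" using True False k by (auto simp: Jset_def Iset_def)
      have sx: "(\<Sum>k\<in>Jset r n. x k * nuZ k i) = 0" using x unfolding L_ext_def A_ext_def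
        by (metis (mono_tags, lifting) mem_Collect_eq prod.inject)
      have sy: "(\<Sum>k\<in>Jset r n. y k * nuZ k i) = 0" using y unfolding L_ext_def A_ext_def
        by (metis (mono_tags, lifting) mem_Collect_eq prod.inject)
      have "0 = (\<Sum>k\<in>Jset r n. x k * nuZ k i) - (\<Sum>k\<in>Jset r n. y k * nuZ k i)" using sx sy by simp
      also have "\<dots> = (\<Sum>k'\<in>Jset r n. (x k' - y k') * nuZ k' i)" by (simp add: sum_subtractf left_diff_distrib)
      also have "\<dots> = (\<Sum>k'\<in>Jset r n. if k' = (i,0) then x (i,0) - y (i,0) else 0)"
      proof (intro sum.cong refl)
        fix k' assume k': "k' \<in> Jset r n"
        show "(x k' - y k') * nuZ k' i = (if k' = (i,0) then x (i,0) - y (i,0) else 0)"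
        proof (cases "k' \<in> Iset r n")
          case True then show ?thesis using agree by (auto simp: Iset_def)
        next
          case False
          then have "snd k' = 0" using k' by (cases k') (auto simp: Iset_def Jset_def)
          then show ?thesis by (cases k') (auto simp: nuZ_def)
        qed
      qed
      also have "\<dots> = x (i,0) - y (i,0)" using finite_Jset i by (simp add: sum.delta' Jset_def)
      finally show ?thesis using k j by simp
    qed
  qed
qed

theorem mainTheorem3:
  fixes \<rho> :: "nat \<times> nat \<Rightarrow> int^'n"
    and \<Sigma> :: "(nat \<times> nat) set set"
    and r :: nat and n :: "nat \<Rightarrow> nat"
    and P \<sigma> :: "(nat \<times> nat) set"
    and c :: "nat \<times> nat \<Rightarrow> int" and c0 :: "nat \<Rightarrow> int"
  assumes fan: "smooth_complete_fan \<rho> \<Sigma> (Iset r n)"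
    and proj: "projective_fan \<rho> \<Sigma> (Iset r n)"
    and nef: "nef_partition \<rho> \<Sigma> r n"
    and prim: "primitive_collection \<Sigma> (Iset r n) P"
    and sigma: "\<sigma> \<in> \<Sigma>"
    and cpos: "\<forall>k\<in>\<sigma>. c k > 0"
    and crel: "(\<Sum>k\<in>P. \<rho> k) = (\<Sum>k\<in>\<sigma>. c k *s \<rho> k)"
    and c0rel: "A_ext \<rho> r n (\<lambda>k. if k \<in> P then 1 else 0)
              = A_ext \<rho> r n (\<lambda>k. (if k \<in> \<sigma> then c k else 0)
                     + (if snd k = 0 \<and> fst k \<in> {1..r} then c0 (fst k) else 0))"
  shows "(let d = (\<lambda>k. (if k \<in> P then 1 else 0) - (if k \<in> \<sigma> then c k else 0)
                     - (if snd k = 0 \<and> fst k \<in> {1..r} then c0 (fst k) else 0));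
              le = ext_of \<rho> r n (primitive_relation P \<sigma> c)
          in d = le
           \<and> (\<forall>k\<in>Jset r n. pos_part le k = (if k \<in> P then 1 else 0))
           \<and> (\<forall>k\<in>Jset r n. neg_part le k =
                (if k \<in> \<sigma> then c k else if snd k = 0 then c0 (fst k) else 0)))"
proof -
  define d where "d = (\<lambda>k. (if k \<in> P then 1 else 0) - (if k \<in> \<sigma> then c k else 0)
                     - (if snd k = 0 \<and> fst k \<in> {1..r} then c0 (fst k) else 0))"
  have PI: "P \<subseteq> Iset r n" using prim by (simp add: primitive_collection_def)
  have \<sigma>I: "\<sigma> \<subseteq> Iset r n" using fan sigma by (simp add: smooth_complete_fan_def)
  have disj: "P \<inter> \<sigma> = {}" by (rule disjoint_P_sigma[OF fan prim sigma cpos crel])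
  have c0nn: "\<And>i. i \<in> {1..r} \<Longrightarrow> c0 i \<ge> 0"
    by (rule c0_nonneg[OF fan nef prim sigma crel c0rel])
  have dd: "d = (\<lambda>k. (\<lambda>k. if k \<in> P then 1 else 0) k - (\<lambda>k. (if k \<in> \<sigma> then c k else 0)
                     + (if snd k = 0 \<and> fst k \<in> {1..r} then c0 (fst k) else 0)) k)"
    unfolding d_def by (rule ext) simp
  have dL: "d \<in> L_ext \<rho> r n"
    unfolding L_ext_def
  proof (intro CollectI conjI allI impI)
    fix k assume kJ: "k \<notin> Jset r n"
    have "k \<notin> P" "k \<notin> \<sigma>" using kJ PI \<sigma>I Iset_sub by blast+
    moreover have "\<not> (snd k = 0 \<and> fst k \<in> {1..r})" using kJ by (cases k) (auto simp: Jset_def)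
    ultimately show "d k = 0" unfolding d_def by auto
  next
    show "A_ext \<rho> r n d = (0, \<lambda>_. 0)"
      unfolding dd A_ext_diff using c0rel by simp
  qed
  have dI: "\<forall>k\<in>Iset r n. d k = primitive_relation P \<sigma> c k"
    by (auto simp: d_def primitive_relation_def Iset_def)
  have le: "ext_of \<rho> r n (primitive_relation P \<sigma> c) = d"
    unfolding ext_of_def
  proof (rule the_equality)
    show "d \<in> L_ext \<rho> r n \<and> (\<forall>k\<in>Iset r n. d k = primitive_relation P \<sigma> c k)" using dL dI by blast
  next
    fix x assume "x \<in> L_ext \<rho> r n \<and> (\<forall>k\<in>Iset r n. x k = primitive_relation P \<sigma> c k)"
    then show "x = d" using L_ext_unique[of x \<rho> r n d] dL dI by auto
  qed
  have pos: "\<forall>k\<in>Jset r n. pos_part d k = (if k \<in> P then 1 else 0)"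
  proof
    fix k assume kJ: "k \<in> Jset r n"
    show "pos_part d k = (if k \<in> P then 1 else 0)"
    proof (cases "k \<in> P")
      case True
      then have "k \<notin> \<sigma>" "snd k \<noteq> 0" using disj PI by (auto simp: Iset_def)
      then show ?thesis using True by (simp add: pos_part_def d_def)
    next
      case False
      have "fst k \<in> {1..r}" using kJ by (auto simp: Jset_def)
      then show ?thesis using False cpos c0nn[of "fst k"] by (auto simp: pos_part_def d_def)
    qed
  qed
  have neg: "\<forall>k\<in>Jset r n. neg_part d k =
                (if k \<in> \<sigma> then c k else if snd k = 0 then c0 (fst k) else 0)"
  proof
    fix k assume kJ: "k \<in> Jset r n"
    have f: "fst k \<in> {1..r}" using kJ by (auto simp: Jset_def)
    show "neg_part d k = (if k \<in> \<sigma> then c k else if snd k = 0 then c0 (fst k) else 0)"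
    proof (cases "k \<in> \<sigma>")
      case True
      then have "k \<notin> P" "snd k \<noteq> 0" using disj \<sigma>I by (auto simp: Iset_def)
      then show ?thesis using True cpos by (auto simp: neg_part_def d_def)
    next
      case False
      have "k \<in> P \<Longrightarrow> snd k \<noteq> 0" using PI by (auto simp: Iset_def)
      then show ?thesis using False f c0nn[of "fst k"] by (auto simp: neg_part_def d_def)
    qed
  qed
  show ?thesis unfolding Let_def le using pos neg d_def by simp
qed

end
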